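(* There exist a sequence $(w_n)_{n\ge1}$ of words over $\{0,1\}$ and a sequence $(\ell_n)_{n\ge1}$ of positive integers such that for every $n$: $|w_n|=2^n$, $\mathrm{even}(w_{n+1})=w_n$, $w_n$ is $\ell_n$-perfect, and $(\ell_n)_{n\ge1}$ is non-decreasing and unbounded. Furthermore, this can be achieved with $w_1=01$.
   Context: For a finite word $z=a_1\cdots a_m$, $\mathrm{even}(z)=a_2a_4\cdots$. For words $w,u$, $|w|^{al}_u=|\{i: w[i..i+|u|-1]=u,\ i\equiv1\bmod|u|\}|$. A finite binary word $w$ is $\ell$-perfect if $|w|$ is a multiple of $\ell$ and every word $u$ of length $\ell$ satisfies $|w|^{al}_u=|w|/(\ell2^\ell)$. *)

theory Defs
  imports Complex_Main
begin

text \<open>Binary words are lists of booleans: False = 0, True = 1.\<close>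

text \<open>even(a_1 ... a_m) = a_2 a_4 ...: the letters at even 1-based positions.\<close>
definition even_part :: "'a list \<Rightarrow> 'a list" where
  "even_part z = nths z {i. odd i}"

text \<open>Aligned occurrences: 1-based positions i with w[i..i+|u|-1] = u and
  i = 1 mod |u|, i.e. 0-based start positions j that are multiples of |u|.\<close>
definition aligned_count :: "'a list \<Rightarrow> 'a list \<Rightarrow> nat" where
  "aligned_count w u = card {j. j + length u \<le> length w \<and> length u dvd j
                              \<and> take (length u) (drop j w) = u}"

definition perfect :: "nat \<Rightarrow> bool list \<Rightarrow> bool" where
  "perfect l w \<longleftrightarrow> l dvd length w \<and>
     (\<forall>u. length u = l \<longrightarrow>
        real (aligned_count w u) = real (length w) / (real l * 2 ^ l))"

end

theory Submission imports Defs begin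

definition Blk :: "nat \<Rightarrow> 'a list \<Rightarrow> nat \<Rightarrow> 'a list" where
  "Blk L w i = take L (drop (i*L) w)"

definition cnt :: "nat \<Rightarrow> 'a list \<Rightarrow> 'a list \<Rightarrow> nat" where
  "cnt L w u = card {i. i < length w div L \<and> Blk L w i = u}"

definition Perf :: "nat \<Rightarrow> bool list \<Rightarrow> nat \<Rightarrow> bool" where
  "Perf L w c \<longleftrightarrow> 0 < L \<and> L dvd length w \<and> (\<forall>u::bool list. length u = L \<longrightarrow> cnt L w u = c)"

lemma aligned_cnt:
  assumes L: "0 < L" and d: "L dvd length w" and that: "length u = L"
  shows "aligned_count w u = cnt L w u"
proof -
  obtain m where m: "length w = L * m" using d by (auto elim: dvdE)
  have md: "length w div L = m" using m L by simp
  have "{j. j + length u \<le> length w \<and> length u dvd j \<and> take (length u) (drop j w) = u}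
      = (\<lambda>i. i*L) ` {i. i < length w div L \<and> Blk L w i = u}"
  proof (rule set_eqI, rule iffI)
    fix j assume "j \<in> {j. j + length u \<le> length w \<and> length u dvd j \<and> take (length u) (drop j w) = u}"
    then have j: "j + L \<le> L*m" "L dvd j" "take L (drop j w) = u" using that m by auto
    then obtain k where k: "j = L*k" by (auto elim: dvdE)
    have "L*(k+1) \<le> L*m" using j(1) k by (simp add: algebra_simps)
    then have "k + 1 \<le> m" using L by (simp only: mult_le_cancel1)
    then have "k < m" by simp
    then show "j \<in> (\<lambda>i. i*L) ` {i. i < length w div L \<and> Blk L w i = u}"
      using k j(3) md by (auto simp: Blk_def mult.commute intro!: image_eqI[where x=k])
  next
    fix j assume "j \<in> (\<lambda>i. i*L) ` {i. i < length w div L \<and> Blk L w i = u}"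
    then obtain i where i: "j = i*L" "i < m" "Blk L w i = u" using md by auto
    have "L*(i+1) \<le> L*m" using i(2) by (intro mult_le_mono2) simp
    then show "j \<in> {j. j + length u \<le> length w \<and> length u dvd j \<and> take (length u) (drop j w) = u}"
      using i that m by (auto simp: Blk_def algebra_simps)
  qed
  moreover have "inj_on (\<lambda>i. i*L) X" for X using L by (auto simp: inj_on_def)
  ultimately show ?thesis unfolding aligned_count_def cnt_def by (simp add: card_image)
qed

lemma perfect_of_Perf:
  assumes "Perf L w c" "c * (L * 2^L) = length w"
  shows "perfect L w"
proof -
  have L: "0 < L" "L dvd length w" using assms(1) by (auto simp: Perf_def)
  show ?thesis unfolding perfect_def
  proof (intro conjI allI impI)
    fix u :: "bool list" assume u: "length u = L"
    have "aligned_count w u = c" using aligned_cnt[OF L u] assms(1) u by (simp add: Perf_def)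
    moreover have "real (length w) = real c * (real L * 2^L)" using assms(2)
      by (metis of_nat_mult of_nat_numeral of_nat_power)
    ultimately show "real (aligned_count w u) = real (length w) / (real L * 2 ^ L)"
      using L by simp
  qed (use L in auto)
qed

fun inter :: "'a list \<Rightarrow> 'a list \<Rightarrow> 'a list" where
  "inter (a#x) (b#y) = a # b # inter x y" | "inter _ _ = []"

lemma length_inter: "length x = length y \<Longrightarrow> length (inter x y) = 2 * length x"
  by (induct x y rule: inter.induct) auto

lemma drop_inter: "drop (2*k) (inter x y) = inter (drop k x) (drop k y)"
proof (induct x y arbitrary: k rule: inter.induct)
  case (1 a x b y) then show ?case by (cases k) auto
qed auto

lemma take_inter: "take (2*k) (inter x y) = inter (take k x) (take k y)"
proof (induct x y arbitrary: k rule: inter.induct)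
  case (1 a x b y) then show ?case by (cases k) auto
qed auto

lemma nths_odd2: "nths (a#b#z) {i. odd i} = b # nths z {i. odd i}"
  by (simp add: nths_Cons)

lemma even_part_inter: "length x = length y \<Longrightarrow> even_part (inter x y) = y"
  unfolding even_part_def by (induct x y rule: inter.induct) (auto simp: nths_odd2)

lemma inter_inj: "length a = length b \<Longrightarrow> length c = length d \<Longrightarrow> length a = length c
   \<Longrightarrow> inter a b = inter c d \<Longrightarrow> a = c \<and> b = d"
proof (induct a arbitrary: b c d)
  case Nil then show ?case by simp
next
  case (Cons x a)
  obtain y b' where b: "b = y # b'" using Cons.prems(1) by (cases b) auto
  obtain z c' where c: "c = z # c'" using Cons.prems(3) by (cases c) auto
  obtain t d' where d: "d = t # d'" using Cons.prems(2,3) c by (cases d) auto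
  show ?case using Cons.hyps[of b' c' d'] Cons.prems b c d by simp
qed

lemma inter_surj: "length u = 2*m \<Longrightarrow> \<exists>a b. length a = m \<and> length b = m \<and> u = inter a b"
proof (induct m arbitrary: u)
  case 0 then show ?case by auto
next
  case (Suc m)
  then obtain x y z where u: "u = x # y # z" "length z = 2*m"
    by (cases u; cases "tl u") auto
  then obtain a b where "length a = m" "length b = m" "z = inter a b" using Suc by blast
  then show ?case using u by (intro exI[of _ "x#a"] exI[of _ "y#b"]) auto
qed

lemma Blk_inter: "Blk (2*M) (inter x y) i = inter (Blk M x i) (Blk M y i)"
proof -
  have "i * (2*M) = 2*(i*M)" by simp
  then show ?thesis unfolding Blk_def by (simp only: drop_inter take_inter)
qed

lemma Blk_len: "i*L + L \<le> length w \<Longrightarrow> length (Blk L w i) = L"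
  by (simp add: Blk_def)

lemma Blk_nth: "i*L + L \<le> length w \<Longrightarrow> r < L \<Longrightarrow> Blk L w i ! r = w ! (i*L + r)"
  by (simp add: Blk_def add.commute)


definition rk :: "(nat \<Rightarrow> 'a) \<Rightarrow> nat \<Rightarrow> nat" where
  "rk B i = card {j. j < i \<and> B j = B i}"

lemma rk_count:
  "card {i. i < n \<and> B i = v \<and> rk B i mod P = s}
     = card {k. k < card {i. i < n \<and> B i = v} \<and> k mod P = s}"
proof (induct n)
  case 0 show ?case by simp
next
  case (Suc n)
  let ?c = "card {i. i < n \<and> B i = v}"
  show ?case
  proof (cases "B n = v")
    case True
    have rkn: "rk B n = ?c" using True by (simp add: rk_def)
    have e1: "{i. i < Suc n \<and> B i = v} = insert n {i. i < n \<and> B i = v}" using True by (auto simp: less_Suc_eq)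
    have c1: "card {i. i < Suc n \<and> B i = v} = Suc ?c" unfolding e1 by simp
    have e2: "{i. i < Suc n \<and> B i = v \<and> rk B i mod P = s}
        = (if ?c mod P = s then insert n else id) {i. i < n \<and> B i = v \<and> rk B i mod P = s}"
      using True rkn by (auto simp: less_Suc_eq)
    have e3: "{k. k < Suc ?c \<and> k mod P = s} = (if ?c mod P = s then insert ?c else id) {k. k < ?c \<and> k mod P = s}"
      by (auto simp: less_Suc_eq)
    show ?thesis unfolding c1 e2 e3 using Suc by simp
  next
    case False
    then have "{i. i < Suc n \<and> B i = v} = {i. i < n \<and> B i = v}"
      "{i. i < Suc n \<and> B i = v \<and> rk B i mod P = s} = {i. i < n \<and> B i = v \<and> rk B i mod P = s}"
      by (auto simp: less_Suc_eq)
    then show ?thesis using Suc by simp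
  qed
qed

lemma mod_count:
  assumes "0 < (P::nat)" "s < P"
  shows "card {k. k < m*P \<and> k mod P = s} = m"
proof (induct m)
  case 0 show ?case by simp
next
  case (Suc m)
  have "{k. k < Suc m * P \<and> k mod P = s} = insert (m*P+s) {k. k < m*P \<and> k mod P = s}"
  proof (rule set_eqI, rule iffI)
    fix k assume k: "k \<in> {k. k < Suc m * P \<and> k mod P = s}"
    show "k \<in> insert (m*P+s) {k. k < m*P \<and> k mod P = s}"
    proof (cases "k < m*P")
      case True then show ?thesis using k by simp
    next
      case False
      then have "k div P = m" using k by (auto intro!: div_nat_eqI simp: mult.commute)
      then have "k = m*P + s" using k div_mult_mod_eq[of k P] by simp
      then show ?thesis by simp
    qed
  next
    fix k assume "k \<in> insert (m*P+s) {k. k < m*P \<and> k mod P = s}"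
    then show "k \<in> {k. k < Suc m * P \<and> k mod P = s}" using assms by auto
  qed
  moreover have "m*P+s \<notin> {k. k < m*P \<and> k mod P = s}" by simp
  ultimately show ?case using Suc by simp
qed

lemma card_words: "card {u::bool list. length u = M} = 2^M"
  using card_lists_length_eq[of "UNIV::bool set" M] by simp

lemma finite_words: "finite {u::bool list. length u = M}"
  using finite_lists_length_eq[of "UNIV::bool set" M] by simp

definition Gm :: "nat \<Rightarrow> nat \<Rightarrow> bool list" where
  "Gm M = (SOME h. bij_betw h {0..<(2::nat)^M} {u. length u = M})"

lemma Gm_bij: "bij_betw (Gm M) {0..<(2::nat)^M} {u. length u = M}"
proof -
  have "\<exists>h. bij_betw h {0..<(2::nat)^M} {u::bool list. length u = M}"
    using ex_bij_betw_nat_finite[OF finite_words[of M]] unfolding card_words .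
  then show ?thesis unfolding Gm_def by (rule someI_ex)
qed

lemma Gm_len: "t < 2^M \<Longrightarrow> length (Gm M t) = M"
proof -
  assume "t < 2^M"
  then have "Gm M t \<in> Gm M ` {0..<2^M}" by simp
  then show ?thesis using Gm_bij[of M] by (simp add: bij_betw_def)
qed

lemma Gm_inj: "t < 2^M \<Longrightarrow> s < 2^M \<Longrightarrow> Gm M t = Gm M s \<Longrightarrow> t = s"
  using Gm_bij[of M] by (auto simp: bij_betw_def inj_on_def)

lemma Gm_surj: "length a = M \<Longrightarrow> \<exists>s. s < 2^M \<and> Gm M s = a"
proof -
  assume "length a = M"
  then have "a \<in> Gm M ` {0..<2^M}" using Gm_bij[of M] by (simp add: bij_betw_def)
  then show ?thesis by auto
qed

definition xsel :: "nat \<Rightarrow> bool list \<Rightarrow> bool list" where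
  "xsel M w = map (\<lambda>p. Gm M (rk (Blk M w) (p div M) mod 2^M) ! (p mod M)) [0..<length w]"

lemma blk_le:
  assumes "0 < M" "M dvd length w" "i < length w div M"
  shows "i*M + M \<le> length w"
proof -
  obtain m where m: "length w = M*m" using assms(2) by (auto elim: dvdE)
  then have "i < m" using assms by simp
  then have "(i+1)*M \<le> m*M" by (intro mult_le_mono1) simp
  then show ?thesis using m by (simp add: algebra_simps)
qed

lemma Blk_xsel:
  assumes "0 < M" "M dvd length w" "i < length w div M"
  shows "Blk M (xsel M w) i = Gm M (rk (Blk M w) i mod 2^M)"
proof -
  have le: "i*M + M \<le> length w" using blk_le[OF assms] .
  have lx: "length (xsel M w) = length w" by (simp add: xsel_def)
  have lg: "length (Gm M (rk (Blk M w) i mod 2^M)) = M" by (rule Gm_len) simp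
  show ?thesis
  proof (rule nth_equalityI)
    show "length (Blk M (xsel M w) i) = length (Gm M (rk (Blk M w) i mod 2 ^ M))"
      using Blk_len[of i M "xsel M w"] le lx lg by simp
  next
    fix r assume "r < length (Blk M (xsel M w) i)"
    then have r: "r < M" using Blk_len[of i M "xsel M w"] le lx by simp
    have "i*M + r < length w" using r le by simp
    moreover have "(i*M + r) div M = i" "(i*M + r) mod M = r" using r assms(1) by auto
    ultimately show "Blk M (xsel M w) i ! r = Gm M (rk (Blk M w) i mod 2 ^ M) ! r"
      using Blk_nth[of i M "xsel M w" r] le lx r by (simp add: xsel_def)
  qed
qed


lemma dbl_Perf:
  assumes P: "Perf M w c" and dv: "2^M dvd c"
  shows "Perf (2*M) (inter (xsel M w) w) (c div 2^M)"
proof -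
  have M: "0 < M" "M dvd length w" and cw: "\<And>u. length u = M \<Longrightarrow> cnt M w u = c"
    using P by (auto simp: Perf_def)
  have lx: "length (xsel M w) = length w" by (simp add: xsel_def)
  have li: "length (inter (xsel M w) w) = 2*length w" using lx length_inter by metis
  let ?nb = "length w div M"
  have nb: "length (inter (xsel M w) w) div (2*M) = ?nb" using li M by simp
  have lenB: "length (Blk M w i) = M" if "i < ?nb" for i
    using Blk_len blk_le[OF M that] by blast
  show ?thesis unfolding Perf_def
  proof (intro conjI allI impI)
    show "0 < 2*M" using M by simp
    show "2*M dvd length (inter (xsel M w) w)" using li M by simp
    fix u :: "bool list" assume u: "length u = 2*M"
    obtain a b where ab: "length a = M" "length b = M" "u = inter a b" using inter_surj[OF u] by blast
    obtain s where s: "s < 2^M" "Gm M s = a" using Gm_surj[OF ab(1)] by blast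
    have "{i. i < ?nb \<and> Blk (2*M) (inter (xsel M w) w) i = u}
        = {i. i < ?nb \<and> Blk M w i = b \<and> rk (Blk M w) i mod 2^M = s}"
    proof (rule Collect_cong)
      fix i
      show "(i < ?nb \<and> Blk (2*M) (inter (xsel M w) w) i = u) =
            (i < ?nb \<and> Blk M w i = b \<and> rk (Blk M w) i mod 2^M = s)"
      proof (cases "i < ?nb")
        case True
        have r: "rk (Blk M w) i mod 2^M < 2^M" by simp
        have e: "Blk (2*M) (inter (xsel M w) w) i = inter (Gm M (rk (Blk M w) i mod 2^M)) (Blk M w i)"
          using Blk_inter Blk_xsel[OF M True] by metis
        have "(inter (Gm M (rk (Blk M w) i mod 2^M)) (Blk M w i) = inter a b) =
              (Gm M (rk (Blk M w) i mod 2^M) = a \<and> Blk M w i = b)"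
          using inter_inj[of "Gm M (rk (Blk M w) i mod 2^M)" "Blk M w i" a b] Gm_len[OF r] lenB[OF True] ab
          by auto
        also have "\<dots> = (Blk M w i = b \<and> rk (Blk M w) i mod 2^M = s)"
          using Gm_inj[OF r s(1)] s by auto
        finally show ?thesis using True e ab(3) by simp
      qed simp
    qed
    then have "cnt (2*M) (inter (xsel M w) w) u = card {k. k < cnt M w b \<and> k mod 2^M = s}"
      unfolding cnt_def nb using rk_count by metis
    also have "\<dots> = card {k. k < (c div 2^M) * 2^M \<and> k mod 2^M = s}"
      using cw[OF ab(2)] dv by simp
    also have "\<dots> = c div 2^M" using mod_count[OF _ s(1)] by simp
    finally show "cnt (2*M) (inter (xsel M w) w) u = c div 2^M" .
  qed
qed

lemma down_Perf:
  assumes P: "Perf (2*M) w c" and M: "0 < M"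
  shows "Perf M w (2 * 2^M * c)"
proof -
  have d: "2*M dvd length w" and cw: "\<And>u. length u = 2*M \<Longrightarrow> cnt (2*M) w u = c"
    using P by (auto simp: Perf_def)
  let ?nb = "length w div (2*M)"
  obtain m where m: "length w = 2*M*m" using d by (auto elim: dvdE)
  have nbm: "?nb = m" using m M by simp
  have nb2: "length w div M = 2 * ?nb" using m M nbm by simp
  have Be: "Blk M w (2*i) = take M (Blk (2*M) w i)" for i
    by (simp add: Blk_def mult.commute mult.left_commute)
  have Bo: "Blk M w (2*i+1) = drop M (Blk (2*M) w i)" for i
  proof -
    have "(2*i+1)*M = M + i*(2*M)" by (simp add: algebra_simps)
    then show ?thesis by (simp add: Blk_def drop_take mult.commute mult.left_commute)
  qed
  have lenB: "length (Blk (2*M) w i) = 2*M" if "i < ?nb" for i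
    using Blk_len blk_le[of "2*M" w i] M d that by simp
  have fin: "finite {i. i < ?nb \<and> Q i}" for Q by simp
  show ?thesis unfolding Perf_def
  proof (intro conjI allI impI)
    show "0 < M" by (rule M)
    show "M dvd length w" using d by (auto intro: dvd_mult_left)
    fix v :: "bool list" assume v: "length v = M"
    define A where "A = {i. i < ?nb \<and> take M (Blk (2*M) w i) = v}"
    define B where "B = {i. i < ?nb \<and> drop M (Blk (2*M) w i) = v}"
    have split: "{j. j < length w div M \<and> Blk M w j = v} = (\<lambda>i. 2*i) ` A \<union> (\<lambda>i. 2*i+1) ` B"
    proof (rule set_eqI, rule iffI)
      fix j assume j: "j \<in> {j. j < length w div M \<and> Blk M w j = v}"
      then have jl: "j div 2 < ?nb" using nb2 by auto
      show "j \<in> (\<lambda>i. 2*i) ` A \<union> (\<lambda>i. 2*i+1) ` B"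
      proof (cases "even j")
        case True
        then have "j = 2*(j div 2)" by simp
        then have "j div 2 \<in> A" using j jl Be[of "j div 2"] unfolding A_def by simp
        then show ?thesis using \<open>j = 2*(j div 2)\<close> by blast
      next
        case False
        then have "j = 2*(j div 2)+1" by simp
        then have "j div 2 \<in> B" using j jl Bo[of "j div 2"] unfolding B_def by simp
        then show ?thesis using \<open>j = 2*(j div 2)+1\<close> by blast
      qed
    next
      fix j assume "j \<in> (\<lambda>i. 2*i) ` A \<union> (\<lambda>i. 2*i+1) ` B"
      then show "j \<in> {j. j < length w div M \<and> Blk M w j = v}"
        using Be Bo nb2 unfolding A_def B_def by auto
    qed
    have W: "finite {y::bool list. length y = M}" "card {y::bool list. length y = M} = 2^M"
      using finite_words card_words by auto
    have cardA: "card A = 2^M * c"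
    proof -
      have "A = (\<Union>y\<in>{y::bool list. length y = M}. {i. i < ?nb \<and> Blk (2*M) w i = v @ y})"
      proof (rule set_eqI, rule iffI)
        fix i assume "i \<in> A"
        then have i: "i < ?nb" "take M (Blk (2*M) w i) = v" unfolding A_def by auto
        then have "Blk (2*M) w i = v @ drop M (Blk (2*M) w i)" by (metis append_take_drop_id)
        moreover have "length (drop M (Blk (2*M) w i)) = M" using lenB[OF i(1)] by simp
        ultimately show "i \<in> (\<Union>y\<in>{y::bool list. length y = M}. {i. i < ?nb \<and> Blk (2*M) w i = v @ y})"
          using i by blast
      next
        fix i assume "i \<in> (\<Union>y\<in>{y::bool list. length y = M}. {i. i < ?nb \<and> Blk (2*M) w i = v @ y})"
        then show "i \<in> A" using v unfolding A_def by auto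
      qed
      also have "card \<dots> = (\<Sum>y\<in>{y::bool list. length y = M}. card {i. i < ?nb \<and> Blk (2*M) w i = v @ y})"
        by (rule card_UN_disjoint) (use W in auto)
      also have "\<dots> = (\<Sum>y\<in>{y::bool list. length y = M}. c)"
        using cw v by (intro sum.cong) (auto simp: cnt_def)
      finally show ?thesis using W by simp
    qed
    have cardB: "card B = 2^M * c"
    proof -
      have "B = (\<Union>y\<in>{y::bool list. length y = M}. {i. i < ?nb \<and> Blk (2*M) w i = y @ v})"
      proof (rule set_eqI, rule iffI)
        fix i assume "i \<in> B"
        then have i: "i < ?nb" "drop M (Blk (2*M) w i) = v" unfolding B_def by auto
        then have "Blk (2*M) w i = take M (Blk (2*M) w i) @ v" by (metis append_take_drop_id)
        moreover have "length (take M (Blk (2*M) w i)) = M" using lenB[OF i(1)] by simp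
        ultimately show "i \<in> (\<Union>y\<in>{y::bool list. length y = M}. {i. i < ?nb \<and> Blk (2*M) w i = y @ v})"
          using i by blast
      next
        fix i assume "i \<in> (\<Union>y\<in>{y::bool list. length y = M}. {i. i < ?nb \<and> Blk (2*M) w i = y @ v})"
        then show "i \<in> B" using v unfolding B_def by auto
      qed
      also have "card \<dots> = (\<Sum>y\<in>{y::bool list. length y = M}. card {i. i < ?nb \<and> Blk (2*M) w i = y @ v})"
        by (rule card_UN_disjoint) (use W in auto)
      also have "\<dots> = (\<Sum>y\<in>{y::bool list. length y = M}. c)"
        using cw v by (intro sum.cong) (auto simp: cnt_def)
      finally show ?thesis using W by simp
    qed
    have "card ((\<lambda>i. 2*i) ` A \<union> (\<lambda>i. 2*i+1) ` B) = card ((\<lambda>i. 2*i) ` A) + card ((\<lambda>i. 2*i+1) ` B)"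
    proof (rule card_Un_disjoint)
      show "finite ((\<lambda>i. 2*i) ` A)" "finite ((\<lambda>i. 2*i+1) ` B)" unfolding A_def B_def by simp_all
      have "2*x \<noteq> 2*y+(1::nat)" for x y by presburger
      then show "(\<lambda>i. 2*i) ` A \<inter> (\<lambda>i. 2*i+1) ` B = {}" by blast
    qed
    also have "\<dots> = card A + card B"
      by (simp add: card_image inj_on_def)
    finally show "cnt M w v = 2 * 2^M * c" unfolding cnt_def split using cardA cardB by simp
  qed
qed


fun kk :: "nat \<Rightarrow> nat" where
  "kk 0 = 0"
| "kk (Suc n) = (if Suc (kk n) + 2^Suc (kk n) \<le> Suc n then Suc (kk n) else kk n)"

lemma kk_le: "1 \<le> n \<Longrightarrow> kk n + 2^kk n \<le> n"
proof (induct n)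
  case 0 then show ?case by simp
next
  case (Suc n)
  show ?case
  proof (cases "n = 0")
    case True then show ?thesis by simp
  next
    case False then show ?thesis using Suc by auto
  qed
qed

lemma kk_max: "n < Suc (kk n) + 2^Suc (kk n)"
proof (induct n)
  case 0 then show ?case by simp
next
  case (Suc n)
  show ?case
  proof (cases "Suc (kk n) + 2^Suc (kk n) \<le> Suc n")
    case True
    have "(2::nat)^Suc (Suc (kk n)) = 2^Suc (kk n) + 2^Suc (kk n)" by simp
    moreover have "1 \<le> (2::nat)^Suc (kk n)" by simp
    ultimately show ?thesis using True Suc by simp
  next
    case False then show ?thesis by simp
  qed
qed

lemma kk_mono: "kk n \<le> kk (Suc n)" by simp

lemma kk_step: "kk (Suc n) = kk n \<or> kk (Suc n) = Suc (kk n)" by simp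

lemma kk_unb: "\<exists>n\<ge>1. 2^kk n > (B::nat)"
proof -
  define N where "N = Suc B + 2^Suc B"
  have "kk N > B"
  proof (rule ccontr)
    assume "\<not> B < kk N"
    then have a: "Suc (kk N) \<le> Suc B" by simp
    then have "(2::nat)^Suc (kk N) \<le> 2^Suc B" by (rule power_increasing) simp
    then have "Suc (kk N) + 2^Suc (kk N) \<le> Suc B + 2^Suc B" using add_le_mono[OF a] by blast
    then have "Suc (kk N) + 2^Suc (kk N) \<le> N" unfolding N_def .
    then show False using kk_max[of N] by simp
  qed
  then have "B < 2^kk N" using less_exp[of "kk N"] by linarith
  moreover have "1 \<le> N" unfolding N_def by simp
  ultimately show ?thesis by blast
qed

fun ws :: "nat \<Rightarrow> bool list" where
  "ws 0 = [False, True]"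
| "ws (Suc 0) = [False, True]"
| "ws (Suc (Suc 0)) = [False, False, True, True]"
| "ws (Suc (Suc (Suc n))) =
     (if kk (Suc (Suc (Suc n))) = Suc (kk (Suc (Suc n)))
      then inter (xsel (2^kk (Suc (Suc n))) (ws (Suc (Suc n)))) (ws (Suc (Suc n)))
      else inter (xsel (2^(kk (Suc (Suc n)) - 1)) (ws (Suc (Suc n)))) (ws (Suc (Suc n))))"

lemma ws_step: "2 \<le> n \<Longrightarrow> ws (Suc n) =
     (if kk (Suc n) = Suc (kk n)
      then inter (xsel (2^kk n) (ws n)) (ws n)
      else inter (xsel (2^(kk n - 1)) (ws n)) (ws n))"
  by (cases n rule: ws.cases) auto

lemma Perf_one:
  assumes "\<And>b. card {i. i < length w \<and> w ! i = b} = c"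
  shows "Perf 1 w c"
  unfolding Perf_def
proof (intro conjI allI impI)
  fix u :: "bool list" assume "length u = 1"
  then obtain b where u: "u = [b]" by (cases u) auto
  have "{i. i < length w div 1 \<and> Blk 1 w i = u} = {i. i < length w \<and> w ! i = b}"
    unfolding u Blk_def by (auto simp: take_Suc_conv_app_nth)
  then show "cnt 1 w u = c" unfolding cnt_def using assms by simp
qed simp_all

lemma Perf_1: "Perf 1 [False, True] 1"
proof (rule Perf_one)
  fix b
  have "{i. i < length [False, True] \<and> [False, True] ! i = b} = (if b then {1} else {0})"
    by (cases b) (auto simp: less_Suc_eq)
  then show "card {i. i < length [False, True] \<and> [False, True] ! i = b} = 1" by simp
qed

lemma Perf_2: "Perf 1 [False, False, True, True] 2"
proof (rule Perf_one)
  fix b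
  have "{i. i < length [False, False, True, True] \<and> [False, False, True, True] ! i = b} = (if b then {2,3} else {0,1})"
    by (cases b) (auto simp: less_Suc_eq eval_nat_numeral)
  then show "card {i. i < length [False, False, True, True] \<and> [False, False, True, True] ! i = b} = 2" by simp
qed

definition Inv :: "nat \<Rightarrow> bool" where
  "Inv n \<longleftrightarrow> length (ws n) = 2^n \<and> Perf (2^kk n) (ws n) (2^(n - kk n - 2^kk n))"

lemma Inv_all: "1 \<le> n \<Longrightarrow> Inv n"
proof (induct n rule: nat_induct_at_least)
  case base
  then show ?case using Perf_1 by (simp add: Inv_def)
next
  case (Suc n)
  show ?case
  proof (cases "n = 1")
    case True
    then show ?thesis using Perf_2 by (simp add: Inv_def numeral_2_eq_2)
  next
    case False
    then have n2: "2 \<le> n" using Suc by simp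
    let ?k = "kk n"
    have le: "?k + 2^?k \<le> n" using kk_le Suc by simp
    have IH: "length (ws n) = 2^n" "Perf (2^?k) (ws n) (2^(n - ?k - 2^?k))"
      using Suc by (auto simp: Inv_def)
    show ?thesis
    proof (cases "kk (Suc n) = Suc ?k")
      case True
      have ws: "ws (Suc n) = inter (xsel (2^?k) (ws n)) (ws n)" using ws_step[OF n2] True by simp
      have cond: "Suc ?k + 2^Suc ?k \<le> Suc n" using True kk_le[of "Suc n"] by simp
      then have e: "2^?k \<le> n - ?k - 2^?k" by simp
      have "Perf (2*2^?k) (ws (Suc n)) (2^(n - ?k - 2^?k) div 2^(2^?k))"
        unfolding ws by (rule dbl_Perf[OF IH(2)]) (use e in \<open>simp add: le_imp_power_dvd\<close>)
      moreover have "2^(n - ?k - 2^?k) div 2^(2^?k) = (2::nat)^(n - ?k - 2^?k - 2^?k)"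
        using power_diff[of "2::nat" "2^?k" "n - ?k - 2^?k"] e by simp
      moreover have "n - ?k - 2^?k - 2^?k = Suc n - Suc ?k - 2^Suc ?k" by simp
      moreover have "length (ws (Suc n)) = 2^Suc n"
        unfolding ws using length_inter[of "xsel (2^?k) (ws n)" "ws n"] IH(1) by (simp add: xsel_def)
      ultimately show ?thesis unfolding Inv_def True by simp
    next
      case False
      then have kS: "kk (Suc n) = ?k" using kk_step by metis
      have k1: "1 \<le> ?k"
      proof (rule ccontr)
        assume "\<not> 1 \<le> ?k"
        then have "?k = 0" by simp
        then show False using False le n2 by simp
      qed
      let ?M = "2^(?k - 1)"
      have M2: "(2::nat)^?k = 2 * ?M" using k1 by (metis Suc_diff_le diff_Suc_1 power_Suc)
      have ws: "ws (Suc n) = inter (xsel ?M (ws n)) (ws n)" using ws_step[OF n2] False by simp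
      have D: "Perf ?M (ws n) (2 * 2^?M * 2^(n - ?k - 2^?k))"
        using down_Perf[of ?M "ws n"] IH(2) M2 by simp
      have "Perf (2*?M) (ws (Suc n)) ((2 * 2^?M * 2^(n - ?k - 2^?k)) div 2^?M)"
        unfolding ws by (rule dbl_Perf[OF D]) simp
      moreover have "(2 * 2^?M * 2^(n - ?k - 2^?k)) div 2^?M = (2::nat)^(Suc n - ?k - 2^?k)"
        using le by (simp add: Suc_diff_le)
      moreover have "length (ws (Suc n)) = 2^Suc n"
        unfolding ws using length_inter[of "xsel ?M (ws n)" "ws n"] IH(1) by (simp add: xsel_def)
      ultimately show ?thesis unfolding Inv_def kS M2 by simp
    qed
  qed
qed


lemma ws_props:
  assumes "1 \<le> n"
  shows "(0::nat) < 2^kk n \<and> length (ws n) = 2 ^ n \<and> even_part (ws (Suc n)) = ws n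
          \<and> perfect (2^kk n) (ws n) \<and> (2::nat)^kk n \<le> 2^kk (Suc n)"
proof (intro conjI)
  show "(0::nat) < 2^kk n" by simp
  show "length (ws n) = 2^n" using Inv_all[OF assms] by (simp add: Inv_def)
  show "(2::nat)^kk n \<le> 2^kk (Suc n)" by (rule power_increasing) simp_all
  show "even_part (ws (Suc n)) = ws n"
  proof (cases "n = 1")
    case True then show ?thesis by (simp add: even_part_def nths_odd2)
  next
    case False
    then have n2: "2 \<le> n" using assms by simp
    show ?thesis using ws_step[OF n2] by (simp add: even_part_inter xsel_def)
  qed
  show "perfect (2^kk n) (ws n)"
  proof (rule perfect_of_Perf)
    show "Perf (2^kk n) (ws n) (2^(n - kk n - 2^kk n))" using Inv_all[OF assms] by (simp add: Inv_def)
    have le: "kk n + 2^kk n \<le> n" using kk_le assms by simp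
    have "(2::nat)^(n - kk n - 2^kk n) * (2^kk n * 2^(2^kk n)) = 2^(n - kk n - 2^kk n + kk n + 2^kk n)"
      by (simp add: power_add)
    also have "\<dots> = 2^n" using le by simp
    finally show "2^(n - kk n - 2^kk n) * (2^kk n * 2^(2^kk n)) = length (ws n)"
      using Inv_all[OF assms] by (simp add: Inv_def)
  qed
qed

theorem corollary12:
  shows "(\<exists>(w :: nat \<Rightarrow> bool list) (l :: nat \<Rightarrow> nat).
            (\<forall>n\<ge>1. l n > 0 \<and> length (w n) = 2 ^ n \<and> even_part (w (Suc n)) = w n
                     \<and> perfect (l n) (w n) \<and> l n \<le> l (Suc n))
          \<and> (\<forall>B. \<exists>n\<ge>1. l n > B))
       \<and> (\<exists>(w :: nat \<Rightarrow> bool list) (l :: nat \<Rightarrow> nat).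
            (\<forall>n\<ge>1. l n > 0 \<and> length (w n) = 2 ^ n \<and> even_part (w (Suc n)) = w n
                     \<and> perfect (l n) (w n) \<and> l n \<le> l (Suc n))
          \<and> (\<forall>B. \<exists>n\<ge>1. l n > B)
          \<and> w 1 = [False, True])"
proof -
  define l where "l = (\<lambda>n. (2::nat)^kk n)"
  have P: "\<forall>n\<ge>1. l n > 0 \<and> length (ws n) = 2 ^ n \<and> even_part (ws (Suc n)) = ws n
                     \<and> perfect (l n) (ws n) \<and> l n \<le> l (Suc n)"
    unfolding l_def using ws_props by blast
  have U: "\<forall>B. \<exists>n\<ge>1. l n > B" unfolding l_def using kk_unb by blast
  have W: "ws 1 = [False, True]" by simp
  show ?thesis
    apply (intro conjI)
     apply (rule exI[of _ ws], rule exI[of _ l])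
     apply (intro conjI, rule P, rule U)
    apply (rule exI[of _ ws], rule exI[of _ l])
    apply (intro conjI, rule P, rule U, rule W)
    done
qed

end
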